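(* Let $P$ be a finite poset and $R$ a consistent restriction function on $P$. Let $H_\Gamma:\Gamma(P,R)\to\mathbb{Z}$ be the map $(p,k)\mapsto k$. Then there is a bijection $\varphi:\mathrm{Inc}^R(P)\to J(\Gamma(P,R))$ such that $\varphi\circ\mathrm{IncPro}=\mathrm{TogPro}_{H_\Gamma}\circ\varphi$.
   Context: A restriction function on $P$ assigns to each $p$ a nonempty finite $R(p)\subseteq\mathbb{Z}$; $\mathrm{Inc}^R(P)$ is the set of $f:P\to\mathbb{Z}$ with $f(p)\in R(p)$ and $p_1<p_2\Rightarrow f(p_1)<f(p_2)$. $R$ is consistent if for every cover $x\lessdot y$ in $P$, $\min R(x)<\min R(y)$ and $\max R(x)<\max R(y)$. $R(p)^*=R(p)\setminus\{\max R(p)\}$; $R(p)_{>k}$ (resp. $R(p)_{<k}$) is the smallest (resp. largest) element of $R(p)$ greater (resp. less) than $k$. $\Gamma(P,R)$ is the poset on $\{(p,k):p\in P, k\in R(p)^*\}$ whose order is the reflexive–transitive closure of the relation $(p_1,k_1)\lessdot(p_2,k_2)$, holding iff either (1) $p_1=p_2$ and $R(p_1)_{>k_2}=k_1$; or (2) $p_1\lessdot p_2$ in $P$, $k_1=R(p_1)_{<k_2}$, $k_1\neq\max R(p_1)$, and no $k\in R(p_2)$ with $k>k_2$ has $R(p_1)_{<k}=k_1$. Generalized Bender–Knuth involution: for $i\in\mathbb{Z}$ and $f\in\mathrm{Inc}^R(P)$, $\rho_i(f)(p)=R(p)_{>i}$ if $f(p)=i$ and the labeling obtained from $f$ by changing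 only the value at $p$ to $R(p)_{>i}$ lies in $\mathrm{Inc}^R(P)$; $\rho_i(f)(p)=i$ if $f(p)=R(p)_{>i}$ and the labeling obtained by changing only the value at $p$ to $i$ lies in $\mathrm{Inc}^R(P)$; otherwise $\rho_i(f)(p)=f(p)$. $\mathrm{IncPro}$ applies $\rho_i$ for all $i\in\mathbb{Z}$ in increasing order of $i$ (only finitely many act nontrivially), i.e. $\mathrm{IncPro}=\cdots\circ\rho_3\circ\rho_2\circ\rho_1\circ\cdots$. For a finite poset $Q$, $J(Q)$ is its set of order ideals. For $x\in Q$ the toggle $t_x:J(Q)\to J(Q)$ sends $I$ to $I\cup\{x\}$ if $x\notin I$ and this is an order ideal, to $I\setminus\{x\}$ if $x\in I$ and this is an order ideal, and to $I$ otherwise. For $H:Q\to\mathbb{Z}$ with $H(x)\ne H(y)$ whenever $x\lessdot y$ (a toggle order), $T_H^i$ is the product of the (pairwise commuting) toggles $t_x$ with $H(x)=i$, and $\mathrm{TogPro}_H$ applies $T_H^i$ in increasing order of $i$: $\mathrm{TogPro}_H=\cdots T_H^{2}T_H^1T_H^0T_H^{-1}T_H^{-2}\cdots$ (composition right to left). *)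

theory Defs
  imports "HOL-Library.FuncSet"
begin

text \<open>The finite poset P is a finite subset of a type with a partial order,
  carrying the induced order.  Covers are taken inside P.\<close>

definition covers :: "'a::order set \<Rightarrow> 'a \<Rightarrow> 'a \<Rightarrow> bool" where
  "covers P x y \<longleftrightarrow> x \<in> P \<and> y \<in> P \<and> x < y \<and> \<not> (\<exists>z\<in>P. x < z \<and> z < y)"

definition restriction_fun :: "'a set \<Rightarrow> ('a \<Rightarrow> int set) \<Rightarrow> bool" where
  "restriction_fun P R \<longleftrightarrow> (\<forall>p\<in>P. R p \<noteq> {} \<and> finite (R p))"

definition consistent :: "'a::order set \<Rightarrow> ('a \<Rightarrow> int set) \<Rightarrow> bool" where
  "consistent P R \<longleftrightarrow> (\<forall>x y. covers P x y \<longrightarrow> Min (R x) < Min (R y) \<and> Max (R x) < Max (R y))"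

definition is_succ :: "int set \<Rightarrow> int \<Rightarrow> int \<Rightarrow> bool" where
  "is_succ A k x \<longleftrightarrow> x \<in> A \<and> k < x \<and> (\<forall>y\<in>A. k < y \<longrightarrow> x \<le> y)"

definition is_pred :: "int set \<Rightarrow> int \<Rightarrow> int \<Rightarrow> bool" where
  "is_pred A k x \<longleftrightarrow> x \<in> A \<and> x < k \<and> (\<forall>y\<in>A. y < k \<longrightarrow> y \<le> x)"

definition IncR :: "'a::order set \<Rightarrow> ('a \<Rightarrow> int set) \<Rightarrow> ('a \<Rightarrow> int) set" where
  "IncR P R = {f. f \<in> extensional P \<and> (\<forall>p\<in>P. f p \<in> R p) \<and>
                  (\<forall>p1\<in>P. \<forall>p2\<in>P. p1 < p2 \<longrightarrow> f p1 < f p2)}"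

definition rho :: "'a::order set \<Rightarrow> ('a \<Rightarrow> int set) \<Rightarrow> int \<Rightarrow> ('a \<Rightarrow> int) \<Rightarrow> ('a \<Rightarrow> int)" where
  "rho P R i f = (\<lambda>p.
     if p \<in> P \<and> f p = i \<and> (\<exists>x. is_succ (R p) i x \<and> f(p := x) \<in> IncR P R)
       then (THE x. is_succ (R p) i x)
     else if p \<in> P \<and> is_succ (R p) i (f p) \<and> f(p := i) \<in> IncR P R then i
     else f p)"

text \<open>IncPro applies rho_i in increasing order of i.  Only i in the union of the
  R(p) can act nontrivially, so we compose over these values in increasing order.\<close>

definition IncPro :: "'a::order set \<Rightarrow> ('a \<Rightarrow> int set) \<Rightarrow> ('a \<Rightarrow> int) \<Rightarrow> ('a \<Rightarrow> int)" where
  "IncPro P R f = fold (rho P R) (sorted_list_of_set (\<Union>p\<in>P. R p)) f"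

definition Gamma :: "'a set \<Rightarrow> ('a \<Rightarrow> int set) \<Rightarrow> ('a \<times> int) set" where
  "Gamma P R = {(p, k). p \<in> P \<and> k \<in> R p - {Max (R p)}}"

definition gamma_cover :: "'a::order set \<Rightarrow> ('a \<Rightarrow> int set) \<Rightarrow> ('a \<times> int) \<Rightarrow> ('a \<times> int) \<Rightarrow> bool" where
  "gamma_cover P R a b \<longleftrightarrow> a \<in> Gamma P R \<and> b \<in> Gamma P R \<and>
     (let (p1, k1) = a; (p2, k2) = b in
       (p1 = p2 \<and> is_succ (R p1) k2 k1) \<or>
       (covers P p1 p2 \<and> is_pred (R p1) k2 k1 \<and> k1 \<noteq> Max (R p1) \<and>
        \<not> (\<exists>k\<in>R p2. k > k2 \<and> is_pred (R p1) k k1)))"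

definition gamma_le :: "'a::order set \<Rightarrow> ('a \<Rightarrow> int set) \<Rightarrow> ('a \<times> int) \<Rightarrow> ('a \<times> int) \<Rightarrow> bool" where
  "gamma_le P R = (gamma_cover P R)\<^sup>*\<^sup>*"

definition order_ideals :: "'b set \<Rightarrow> ('b \<Rightarrow> 'b \<Rightarrow> bool) \<Rightarrow> 'b set set" where
  "order_ideals Q le = {I. I \<subseteq> Q \<and> (\<forall>x\<in>I. \<forall>y\<in>Q. le y x \<longrightarrow> y \<in> I)}"

definition toggle :: "'b set \<Rightarrow> ('b \<Rightarrow> 'b \<Rightarrow> bool) \<Rightarrow> 'b \<Rightarrow> 'b set \<Rightarrow> 'b set" where
  "toggle Q le x I =
     (if x \<notin> I \<and> insert x I \<in> order_ideals Q le then insert x I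
      else if x \<in> I \<and> I - {x} \<in> order_ideals Q le then I - {x}
      else I)"

text \<open>T_H^i: product of the toggles t_x with H x = i (they pairwise commute,
  so we compose them in an arbitrary fixed enumeration).\<close>

definition togT :: "'b set \<Rightarrow> ('b \<Rightarrow> 'b \<Rightarrow> bool) \<Rightarrow> ('b \<Rightarrow> int) \<Rightarrow> int \<Rightarrow> 'b set \<Rightarrow> 'b set" where
  "togT Q le H i = fold (toggle Q le)
      (SOME xs. distinct xs \<and> set xs = {x\<in>Q. H x = i})"

definition TogPro :: "'b set \<Rightarrow> ('b \<Rightarrow> 'b \<Rightarrow> bool) \<Rightarrow> ('b \<Rightarrow> int) \<Rightarrow> 'b set \<Rightarrow> 'b set" where
  "TogPro Q le H I = fold (togT Q le H) (sorted_list_of_set (H ` Q)) I"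

end

theory Submission
  imports Defs
begin

lemma is_succ_unique: "is_succ A k x \<Longrightarrow> is_succ A k y \<Longrightarrow> x = y"
  unfolding is_succ_def by (meson antisym)

lemma is_pred_unique: "is_pred A k x \<Longrightarrow> is_pred A k y \<Longrightarrow> x = y"
  unfolding is_pred_def by (meson antisym)

lemma succ_exists:
  assumes "finite A" "x \<in> A" "k < x" shows "\<exists>s. is_succ A k s"
proof -
  let ?S = "{y\<in>A. k < y}"
  have "finite ?S" "?S \<noteq> {}" using assms by auto
  then have "Min ?S \<in> ?S" "\<forall>y\<in>?S. Min ?S \<le> y" using Min_in by auto
  then show ?thesis unfolding is_succ_def by blast
qed

lemma pred_exists:
  assumes "finite A" "x \<in> A" "x < k" shows "\<exists>s. is_pred A k s"
proof -
  let ?S = "{y\<in>A. y < k}"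
  have "finite ?S" "?S \<noteq> {}" using assms by auto
  then have "Max ?S \<in> ?S" "\<forall>y\<in>?S. y \<le> Max ?S" using Max_in by auto
  then show ?thesis unfolding is_pred_def by blast
qed

definition simul :: "'b set \<Rightarrow> ('b \<Rightarrow> 'b \<Rightarrow> bool) \<Rightarrow> 'b set \<Rightarrow> 'b set \<Rightarrow> 'b set" where
  "simul Q le S J = {z. if z \<in> S then z \<in> toggle Q le z J else z \<in> J}"

locale crel =
  fixes Q :: "'b set" and c :: "'b \<Rightarrow> 'b \<Rightarrow> bool"
  assumes cQ: "\<And>a b. c a b \<Longrightarrow> a \<in> Q" and irr: "\<And>y. \<not> c y y"
begin

lemma ideals_iff:
  shows "I \<in> order_ideals Q c\<^sup>*\<^sup>* \<longleftrightarrow> I \<subseteq> Q \<and> (\<forall>a b. c a b \<longrightarrow> b \<in> I \<longrightarrow> a \<in> I)"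
proof
  assume "I \<in> order_ideals Q c\<^sup>*\<^sup>*"
  then have I: "I \<subseteq> Q" "\<And>x y. x \<in> I \<Longrightarrow> y \<in> Q \<Longrightarrow> c\<^sup>*\<^sup>* y x \<Longrightarrow> y \<in> I"
    unfolding order_ideals_def by auto
  show "I \<subseteq> Q \<and> (\<forall>a b. c a b \<longrightarrow> b \<in> I \<longrightarrow> a \<in> I)"
  proof (intro conjI allI impI)
    fix a b assume "c a b" "b \<in> I"
    then show "a \<in> I" using I(2)[of b a] cQ[of a b] r_into_rtranclp[of c a b] by simp
  qed (rule I(1))
next
  assume h: "I \<subseteq> Q \<and> (\<forall>a b. c a b \<longrightarrow> b \<in> I \<longrightarrow> a \<in> I)"
  have "c\<^sup>*\<^sup>* y x \<Longrightarrow> x \<in> I \<Longrightarrow> y \<in> I" for y x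
    by (induction rule: converse_rtranclp_induct) (use h in auto)
  then show "I \<in> order_ideals Q c\<^sup>*\<^sup>*" unfolding order_ideals_def using h by auto
qed

lemma toggle_ideal:
  "J \<in> order_ideals Q le \<Longrightarrow> toggle Q le y J \<in> order_ideals Q le"
  unfolding toggle_def by auto

lemma toggle_other: "z \<noteq> y \<Longrightarrow> z \<in> toggle Q le y J \<longleftrightarrow> z \<in> J"
  unfolding toggle_def by auto

lemma ideal_closed:
  assumes J: "J \<in> order_ideals Q c\<^sup>*\<^sup>*"
  shows "J \<subseteq> Q" "\<And>a b. c a b \<Longrightarrow> b \<in> J \<Longrightarrow> a \<in> J"
proof -
  have "J \<subseteq> Q \<and> (\<forall>a b. c a b \<longrightarrow> b \<in> J \<longrightarrow> a \<in> J)"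
    using ideals_iff[of J] J by blast
  then show "J \<subseteq> Q" "\<And>a b. c a b \<Longrightarrow> b \<in> J \<Longrightarrow> a \<in> J" by blast+
qed

lemma insert_ideal_iff:
  assumes J: "J \<in> order_ideals Q c\<^sup>*\<^sup>*" and y: "y \<in> Q"
  shows "insert y J \<in> order_ideals Q c\<^sup>*\<^sup>* \<longleftrightarrow> (\<forall>a. c a y \<longrightarrow> a \<in> J)"
proof
  assume h: "insert y J \<in> order_ideals Q c\<^sup>*\<^sup>*"
  show "\<forall>a. c a y \<longrightarrow> a \<in> J"
  proof (intro allI impI)
    fix a assume "c a y"
    then have "a \<in> insert y J" using ideal_closed(2)[OF h] by blast
    moreover have "a \<noteq> y" using irr \<open>c a y\<close> by metis
    ultimately show "a \<in> J" by blast
  qed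
next
  assume h: "\<forall>a. c a y \<longrightarrow> a \<in> J"
  show "insert y J \<in> order_ideals Q c\<^sup>*\<^sup>*"
    unfolding ideals_iff
  proof (intro conjI allI impI)
    show "insert y J \<subseteq> Q" using ideal_closed(1)[OF J] y by blast
    fix a b assume "c a b" "b \<in> insert y J"
    then show "a \<in> insert y J" using h ideal_closed(2)[OF J] by blast
  qed
qed

lemma remove_ideal_iff:
  assumes J: "J \<in> order_ideals Q c\<^sup>*\<^sup>*"
  shows "J - {y} \<in> order_ideals Q c\<^sup>*\<^sup>* \<longleftrightarrow> (\<forall>b\<in>J. \<not> c y b)"
proof
  assume h: "J - {y} \<in> order_ideals Q c\<^sup>*\<^sup>*"
  show "\<forall>b\<in>J. \<not> c y b"
  proof (intro ballI notI)
    fix b assume "b \<in> J" "c y b"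
    moreover have "b \<noteq> y" using irr \<open>c y b\<close> by metis
    ultimately have "y \<in> J - {y}" using ideal_closed(2)[OF h] by blast
    then show False by blast
  qed
next
  assume h: "\<forall>b\<in>J. \<not> c y b"
  show "J - {y} \<in> order_ideals Q c\<^sup>*\<^sup>*"
    unfolding ideals_iff
  proof (intro conjI allI impI)
    show "J - {y} \<subseteq> Q" using ideal_closed(1)[OF J] by blast
    fix a b assume "c a b" "b \<in> J - {y}"
    then show "a \<in> J - {y}" using h ideal_closed(2)[OF J] by blast
  qed
qed

lemma toggle_mem:
  assumes J: "J \<in> order_ideals Q c\<^sup>*\<^sup>*" and y: "y \<in> Q"
  shows "y \<in> toggle Q c\<^sup>*\<^sup>* y J \<longleftrightarrow>
     (y \<notin> J \<and> (\<forall>a. c a y \<longrightarrow> a \<in> J)) \<or> (y \<in> J \<and> (\<exists>b\<in>J. c y b))"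
  using insert_ideal_iff[OF J y] remove_ideal_iff[OF J, of y]
  unfolding toggle_def by auto

lemma fold_toggle:
  shows "distinct xs \<Longrightarrow> set xs \<subseteq> Q \<Longrightarrow> (\<forall>a\<in>set xs. \<forall>b\<in>set xs. \<not> c a b) \<Longrightarrow>
     J \<in> order_ideals Q c\<^sup>*\<^sup>* \<Longrightarrow> fold (toggle Q c\<^sup>*\<^sup>*) xs J = simul Q c\<^sup>*\<^sup>* (set xs) J"
proof (induction xs arbitrary: J)
  case Nil
  then show ?case by (simp add: simul_def)
next
  case (Cons x xs)
  let ?J' = "toggle Q c\<^sup>*\<^sup>* x J"
  have J': "?J' \<in> order_ideals Q c\<^sup>*\<^sup>*" using Cons.prems(4) by (rule toggle_ideal)
  have IH: "fold (toggle Q c\<^sup>*\<^sup>*) xs ?J' = simul Q c\<^sup>*\<^sup>* (set xs) ?J'"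
    using Cons J' by auto
  have agree: "\<And>w. w \<noteq> x \<Longrightarrow> w \<in> ?J' \<longleftrightarrow> w \<in> J" by (rule toggle_other)
  have "simul Q c\<^sup>*\<^sup>* (set xs) ?J' = simul Q c\<^sup>*\<^sup>* (set (x # xs)) J"
  proof (rule set_eqI)
    fix z
    show "z \<in> simul Q c\<^sup>*\<^sup>* (set xs) ?J' \<longleftrightarrow> z \<in> simul Q c\<^sup>*\<^sup>* (set (x # xs)) J"
    proof (cases "z = x")
      case True
      then show ?thesis using Cons.prems(1) by (simp add: simul_def)
    next
      case False
      show ?thesis
      proof (cases "z \<in> set xs")
        case True
        have zQ: "z \<in> Q" using True Cons.prems(2) by auto
        have n1: "\<And>a. c a z \<Longrightarrow> a \<noteq> x" using Cons.prems(3) True by auto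
        have n2: "\<And>b. c z b \<Longrightarrow> b \<noteq> x" using Cons.prems(3) True by auto
        have "z \<in> toggle Q c\<^sup>*\<^sup>* z ?J' \<longleftrightarrow> z \<in> toggle Q c\<^sup>*\<^sup>* z J"
          unfolding toggle_mem[OF J' zQ] toggle_mem[OF Cons.prems(4) zQ]
          using agree[OF False] agree n1 n2 by blast
        then show ?thesis using True False by (simp add: simul_def)
      next
        case nz: False
        then show ?thesis using False agree by (simp add: simul_def)
      qed
    qed
  qed
  then show ?case using IH by simp
qed

end

lemma pred_succ: "is_pred A k k' \<Longrightarrow> k \<in> A \<Longrightarrow> is_succ A k' k"
  unfolding is_pred_def is_succ_def by force

lemma succ_le_iff: "is_succ A i s \<Longrightarrow> k \<in> A \<Longrightarrow> k \<noteq> i \<Longrightarrow> (i \<le> k \<longleftrightarrow> s \<le> k)"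
  unfolding is_succ_def by force

lemma fold_filter_id:
  "(\<forall>x\<in>set xs. \<not> Pr x \<longrightarrow> g x = id) \<Longrightarrow> fold g xs = fold g (filter Pr xs)"
  by (induction xs) auto

lemma chain_lemma:
  fixes P :: "'a::order set" and g :: "'a \<Rightarrow> int"
  assumes fin: "finite P" and cov: "\<And>x y. covers P x y \<Longrightarrow> g x < g y"
  shows "x \<in> P \<Longrightarrow> y \<in> P \<Longrightarrow> x < y \<Longrightarrow> g x < g y"
proof (induction "card {z\<in>P. x < z \<and> z < y}" arbitrary: x y rule: less_induct)
  case less
  show ?case
  proof (cases "\<exists>z\<in>P. x < z \<and> z < y")
    case False
    then have "covers P x y" using less.prems by (simp add: covers_def)
    then show ?thesis by (rule cov)
  next
    case True
    then obtain z where z: "z \<in> P" "x < z" "z < y" by blast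
    have f: "finite {w\<in>P. x < w \<and> w < y}" using fin by simp
    have "card {w\<in>P. x < w \<and> w < z} < card {w\<in>P. x < w \<and> w < y}"
      apply (rule psubset_card_mono[OF f])
      using z by (auto intro: less_trans)
    then have 1: "g x < g z" using less.hyps less.prems z by blast
    have "card {w\<in>P. z < w \<and> w < y} < card {w\<in>P. x < w \<and> w < y}"
      apply (rule psubset_card_mono[OF f])
      using z by (auto intro: less_trans)
    then have 2: "g z < g y" using less.hyps less.prems z by blast
    from 1 2 show ?thesis by simp
  qed
qed

definition phiF :: "'a set \<Rightarrow> ('a \<Rightarrow> int set) \<Rightarrow> ('a \<Rightarrow> int) \<Rightarrow> ('a \<times> int) set" where
  "phiF P R f = {x \<in> Gamma P R. f (fst x) \<le> snd x}"

definition RV :: "'a set \<Rightarrow> ('a \<Rightarrow> int set) \<Rightarrow> ('a \<Rightarrow> int) set" where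
  "RV P R = {f. f \<in> extensional P \<and> (\<forall>p\<in>P. f p \<in> R p)}"

lemma Gamma_iff: "(p, k) \<in> Gamma P R \<longleftrightarrow> p \<in> P \<and> k \<in> R p \<and> k \<noteq> Max (R p)"
  by (simp add: Gamma_def)

lemma phiF_iff: "(p, k) \<in> phiF P R f \<longleftrightarrow> (p, k) \<in> Gamma P R \<and> f p \<le> k"
  by (simp add: phiF_def)

lemma gc_iff: "gamma_cover P R (p1, k1) (p2, k2) \<longleftrightarrow> (p1, k1) \<in> Gamma P R \<and> (p2, k2) \<in> Gamma P R \<and>
       ((p1 = p2 \<and> is_succ (R p1) k2 k1) \<or>
       (covers P p1 p2 \<and> is_pred (R p1) k2 k1 \<and> k1 \<noteq> Max (R p1) \<and>
        \<not> (\<exists>k\<in>R p2. k > k2 \<and> is_pred (R p1) k k1)))"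
  by (simp add: gamma_cover_def)

lemma gc_snd: "gamma_cover P R a b \<Longrightarrow> snd a \<noteq> snd b"
  by (cases a; cases b) (auto simp: gc_iff is_succ_def is_pred_def)

lemma gc_in: "gamma_cover P R a b \<Longrightarrow> a \<in> Gamma P R \<and> b \<in> Gamma P R"
  by (simp add: gamma_cover_def)

interpretation gcrel: crel "Gamma P R" "gamma_cover P R"
  by unfold_locales (use gc_in gc_snd in blast)+

lemma IncR_RV: "IncR P R = {f \<in> RV P R. \<forall>p1\<in>P. \<forall>p2\<in>P. p1 < p2 \<longrightarrow> f p1 < f p2}"
  unfolding IncR_def RV_def by auto

locale incsetup =
  fixes P :: "'a::order set" and R :: "'a \<Rightarrow> int set"
  assumes finP: "finite P" and rf: "restriction_fun P R" and cons: "consistent P R"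
begin

lemma finR: "p \<in> P \<Longrightarrow> finite (R p)" and neR: "p \<in> P \<Longrightarrow> R p \<noteq> {}"
  using rf unfolding restriction_fun_def by auto

lemma phi_sub: "phiF P R f \<subseteq> Gamma P R"
  unfolding phiF_def by auto

lemma closed_imp_ideal:
  "(\<forall>a b. gamma_cover P R a b \<longrightarrow> b \<in> phiF P R f \<longrightarrow> a \<in> phiF P R f) \<longleftrightarrow>
   phiF P R f \<in> order_ideals (Gamma P R) (gamma_cover P R)\<^sup>*\<^sup>*"
  using gcrel.ideals_iff[of "phiF P R f"] phi_sub[of f] by blast

lemma cover_step:
  assumes f: "f \<in> RV P R" and cl: "\<forall>a b. gamma_cover P R a b \<longrightarrow> b \<in> phiF P R f \<longrightarrow> a \<in> phiF P R f"
    and cv: "covers P p1 p2"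
  shows "f p1 < f p2"
proof -
  have p12: "p1 \<in> P" "p2 \<in> P" using cv by (auto simp: covers_def)
  have fin1: "finite (R p1)" and fin2: "finite (R p2)" and ne1: "R p1 \<noteq> {}" and ne2: "R p2 \<noteq> {}"
    using finR neR p12 by auto
  have c: "Min (R p1) < Min (R p2)" "Max (R p1) < Max (R p2)" using cons cv unfolding consistent_def by auto
  let ?v = "f p2"
  have v: "?v \<in> R p2" "f p1 \<in> R p1" using f p12 unfolding RV_def by auto
  have fp1le: "f p1 \<le> Max (R p1)" using fin1 v(2) by simp
  show ?thesis
  proof (cases "?v = Max (R p2)")
    case True
    then show ?thesis using fp1le c by simp
  next
    case vne: False
    have "Min (R p2) \<le> ?v" using fin2 v(1) by simp
    then have "Min (R p1) < ?v" using c by simp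
    moreover have "Min (R p1) \<in> R p1" using fin1 ne1 by simp
    ultimately obtain k1 where k1: "is_pred (R p1) ?v k1" using pred_exists[OF fin1] by blast
    have k1v: "k1 < ?v" "k1 \<in> R p1" using k1 unfolding is_pred_def by auto
    have fk1: "f p1 < ?v \<Longrightarrow> f p1 \<le> k1" using k1 v(2) unfolding is_pred_def by auto
    show ?thesis
    proof (cases "k1 = Max (R p1)")
      case True
      then show ?thesis using fp1le k1v by simp
    next
      case k1ne: False
      define S where "S = {k\<in>R p2. is_pred (R p1) k k1}"
      have finS: "finite S" using fin2 unfolding S_def by simp
      have vS: "?v \<in> S" using v k1 unfolding S_def by simp
      define k2 where "k2 = Max S"
      have k2S: "k2 \<in> S" using Max_in[OF finS] vS unfolding k2_def by blast
      have vk2: "?v \<le> k2" using finS vS unfolding k2_def by simp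
      have k2R: "k2 \<in> R p2" and k2p: "is_pred (R p1) k2 k1" using k2S unfolding S_def by auto
      have k2ne: "k2 \<noteq> Max (R p2)"
      proof
        assume eq: "k2 = Max (R p2)"
        have "Max (R p1) \<in> R p1" using fin1 ne1 by simp
        then have "Max (R p1) \<le> k1" using k2p c(2) eq unfolding is_pred_def by auto
        moreover have "k1 \<le> Max (R p1)" using fin1 k1v by simp
        ultimately show False using k1ne by simp
      qed
      have nomore: "\<not> (\<exists>k\<in>R p2. k > k2 \<and> is_pred (R p1) k k1)"
      proof
        assume "\<exists>k\<in>R p2. k > k2 \<and> is_pred (R p1) k k1"
        then obtain k where "k \<in> S" "k > k2" unfolding S_def by auto
        then show False using finS unfolding k2_def by (meson Max_ge not_le)
      qed
      have g1: "(p1, k1) \<in> Gamma P R" using p12 k1v k1ne by (simp add: Gamma_iff)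
      have g2: "(p2, k2) \<in> Gamma P R" using p12 k2R k2ne by (simp add: Gamma_iff)
      have gc: "gamma_cover P R (p1, k1) (p2, k2)"
        unfolding gc_iff using g1 g2 cv k2p k1ne nomore by blast
      have "(p2, k2) \<in> phiF P R f" using g2 vk2 by (simp add: phiF_iff)
      then have "(p1, k1) \<in> phiF P R f" using cl gc by blast
      then have "f p1 \<le> k1" by (simp add: phiF_iff)
      then show ?thesis using k1v by simp
    qed
  qed
qed

lemma lemmaA:
  assumes f: "f \<in> RV P R"
  shows "f \<in> IncR P R \<longleftrightarrow> (\<forall>a b. gamma_cover P R a b \<longrightarrow> b \<in> phiF P R f \<longrightarrow> a \<in> phiF P R f)"
proof
  assume inc: "f \<in> IncR P R"
  show "\<forall>a b. gamma_cover P R a b \<longrightarrow> b \<in> phiF P R f \<longrightarrow> a \<in> phiF P R f"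
  proof (intro allI impI)
    fix a b assume gc: "gamma_cover P R a b" and b: "b \<in> phiF P R f"
    obtain p1 k1 p2 k2 where ab: "a = (p1, k1)" "b = (p2, k2)" by (cases a; cases b)
    have fb: "f p2 \<le> k2" using b ab by (simp add: phiF_iff)
    have ga: "(p1, k1) \<in> Gamma P R" using gc ab gc_in by blast
    have "(p1 = p2 \<and> is_succ (R p1) k2 k1) \<or> (covers P p1 p2 \<and> is_pred (R p1) k2 k1)"
      using gc unfolding ab gc_iff by blast
    then have "f p1 \<le> k1"
    proof
      assume "p1 = p2 \<and> is_succ (R p1) k2 k1"
      then show ?thesis using fb unfolding is_succ_def by auto
    next
      assume h: "covers P p1 p2 \<and> is_pred (R p1) k2 k1"
      then have "p1 \<in> P" "p2 \<in> P" "p1 < p2" by (auto simp: covers_def)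
      then have "f p1 < f p2" "f p1 \<in> R p1" using inc unfolding IncR_def by auto
      then show ?thesis using h fb unfolding is_pred_def by auto
    qed
    then show "a \<in> phiF P R f" using ab ga by (simp add: phiF_iff)
  qed
next
  assume cl: "\<forall>a b. gamma_cover P R a b \<longrightarrow> b \<in> phiF P R f \<longrightarrow> a \<in> phiF P R f"
  have "\<And>x y. covers P x y \<Longrightarrow> f x < f y" using cover_step[OF f cl] by blast
  then have "\<forall>p1\<in>P. \<forall>p2\<in>P. p1 < p2 \<longrightarrow> f p1 < f p2"
    using chain_lemma[OF finP, of f] by blast
  then show "f \<in> IncR P R" using f IncR_RV by blast
qed

lemma phi_inj:
  assumes f: "f \<in> RV P R" and g: "g \<in> RV P R" and eq: "phiF P R f = phiF P R g"
  shows "f = g"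
proof (rule extensionalityI[of _ P])
  show "f \<in> extensional P" "g \<in> extensional P" using f g unfolding RV_def by auto
  fix p assume p: "p \<in> P"
  have fR: "f p \<in> R p" and gR: "g p \<in> R p" using f g p unfolding RV_def by auto
  have fin: "finite (R p)" using finR p .
  show "f p = g p"
  proof (rule ccontr)
    assume ne: "f p \<noteq> g p"
    show False
    proof (cases "f p < g p")
      case True
      have "g p \<le> Max (R p)" using fin gR by simp
      then have "(p, f p) \<in> Gamma P R" using True p fR by (simp add: Gamma_iff)
      then have "(p, f p) \<in> phiF P R f" by (simp add: phiF_iff)
      then have "(p, f p) \<in> phiF P R g" using eq by simp
      then show False using True by (simp add: phiF_iff)
    next
      case False
      then have lt: "g p < f p" using ne by simp
      have "f p \<le> Max (R p)" using fin fR by simp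
      then have "(p, g p) \<in> Gamma P R" using lt p gR by (simp add: Gamma_iff)
      then have "(p, g p) \<in> phiF P R g" by (simp add: phiF_iff)
      then have "(p, g p) \<in> phiF P R f" using eq by simp
      then show False using lt by (simp add: phiF_iff)
    qed
  qed
qed

lemma chain_up:
  assumes cl: "\<forall>a b. gamma_cover P R a b \<longrightarrow> b \<in> J \<longrightarrow> a \<in> J"
    and k0: "(p, k0) \<in> J" and JG: "J \<subseteq> Gamma P R"
  shows "(p, k) \<in> Gamma P R \<Longrightarrow> k0 \<le> k \<Longrightarrow> (p, k) \<in> J"
proof (induction "nat (k - k0)" arbitrary: k rule: less_induct)
  case less
  show ?case
  proof (cases "k = k0")
    case True
    then show ?thesis using k0 by simp
  next
    case False
    then have lt: "k0 < k" using less.prems by simp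
    have pP: "p \<in> P" and kR: "k \<in> R p" using less.prems by (auto simp: Gamma_iff)
    have k0R: "k0 \<in> R p" using k0 JG by (auto simp: Gamma_iff)
    obtain k' where k': "is_pred (R p) k k'" using pred_exists[OF finR[OF pP] k0R lt] by blast
    have k'b: "k0 \<le> k'" "k' < k" "k' \<in> R p" using k' k0R lt unfolding is_pred_def by auto
    have "k \<le> Max (R p)" using finR[OF pP] kR by simp
    then have g': "(p, k') \<in> Gamma P R" using pP k'b by (simp add: Gamma_iff)
    have "(p, k') \<in> J" using less.hyps[of k'] k'b g' by simp
    moreover have "gamma_cover P R (p, k) (p, k')"
      unfolding gc_iff using less.prems g' pred_succ[OF k' kR] by simp
    ultimately show ?thesis using cl by blast
  qed
qed

lemma phi_surj:
  assumes J: "J \<in> order_ideals (Gamma P R) (gamma_cover P R)\<^sup>*\<^sup>*"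
  shows "\<exists>f\<in>RV P R. phiF P R f = J"
proof -
  have JG: "J \<subseteq> Gamma P R" and cl: "\<forall>a b. gamma_cover P R a b \<longrightarrow> b \<in> J \<longrightarrow> a \<in> J"
    using J gcrel.ideals_iff by blast+
  define T where "T p = {k\<in>R p. (p, k) \<in> J} \<union> {Max (R p)}" for p
  define f where "f = restrict (\<lambda>p. Min (T p)) P"
  have finT: "p \<in> P \<Longrightarrow> finite (T p)" for p using finR unfolding T_def by simp
  have fT: "f p \<in> T p" if p: "p \<in> P" for p
  proof -
    have "T p \<noteq> {}" by (simp add: T_def)
    then have "Min (T p) \<in> T p" using Min_in[OF finT[OF p]] by blast
    then show ?thesis using p by (simp add: f_def)
  qed
  have fle: "p \<in> P \<Longrightarrow> k \<in> T p \<Longrightarrow> f p \<le> k" for p k using finT unfolding f_def by simp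
  have MaxR: "p \<in> P \<Longrightarrow> Max (R p) \<in> R p" for p using finR neR by simp
  have TR: "p \<in> P \<Longrightarrow> T p \<subseteq> R p" for p using MaxR unfolding T_def by auto
  have "f \<in> extensional P" by (simp add: f_def)
  moreover have "\<forall>p\<in>P. f p \<in> R p" using fT TR by blast
  ultimately have fRV: "f \<in> RV P R" unfolding RV_def by blast
  have "phiF P R f = J"
  proof (rule set_eqI)
    fix x :: "'a \<times> int"
    obtain p k where x: "x = (p, k)" by (cases x) blast
    show "x \<in> phiF P R f \<longleftrightarrow> x \<in> J"
    proof
      assume "x \<in> J"
      then have g: "(p, k) \<in> Gamma P R" using JG x by auto
      then have "p \<in> P" "k \<in> T p" using \<open>x \<in> J\<close> x unfolding T_def by (auto simp: Gamma_iff)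
      then show "x \<in> phiF P R f" using fle g x by (simp add: phiF_iff)
    next
      assume "x \<in> phiF P R f"
      then have g: "(p, k) \<in> Gamma P R" and le: "f p \<le> k" using x by (auto simp: phiF_iff)
      then have pP: "p \<in> P" and kR: "k \<in> R p" and kne: "k \<noteq> Max (R p)" by (auto simp: Gamma_iff)
      have "f p \<in> T p" using fT pP .
      then consider "(p, f p) \<in> J" | "f p = Max (R p)" unfolding T_def by auto
      then show "x \<in> J"
      proof cases
        case 1
        then show ?thesis using chain_up[OF cl 1 JG g le] x by simp
      next
        case 2
        have "k \<le> Max (R p)" using finR[OF pP] kR by simp
        then show ?thesis using 2 le kne by simp
      qed
    qed
  qed
  then show ?thesis using fRV by blast
qed

lemma phi_bij:
  "bij_betw (phiF P R) (IncR P R) (order_ideals (Gamma P R) (gamma_cover P R)\<^sup>*\<^sup>*)"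
proof (rule bij_betw_imageI)
  show "inj_on (phiF P R) (IncR P R)"
  proof (rule inj_onI)
    fix f g assume "f \<in> IncR P R" "g \<in> IncR P R" "phiF P R f = phiF P R g"
    then show "f = g" using phi_inj[of f g] IncR_RV by blast
  qed
  show "phiF P R ` IncR P R = order_ideals (Gamma P R) (gamma_cover P R)\<^sup>*\<^sup>*"
  proof
    show "phiF P R ` IncR P R \<subseteq> order_ideals (Gamma P R) (gamma_cover P R)\<^sup>*\<^sup>*"
    proof
      fix J assume "J \<in> phiF P R ` IncR P R"
      then obtain f where f: "f \<in> IncR P R" "J = phiF P R f" by blast
      then have "f \<in> RV P R" using IncR_RV by blast
      then show "J \<in> order_ideals (Gamma P R) (gamma_cover P R)\<^sup>*\<^sup>*"
        using lemmaA[of f] closed_imp_ideal[of f] f by blast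
    qed
    show "order_ideals (Gamma P R) (gamma_cover P R)\<^sup>*\<^sup>* \<subseteq> phiF P R ` IncR P R"
    proof
      fix J assume J: "J \<in> order_ideals (Gamma P R) (gamma_cover P R)\<^sup>*\<^sup>*"
      obtain f where f: "f \<in> RV P R" "phiF P R f = J" using phi_surj[OF J] by blast
      then have "f \<in> IncR P R" using lemmaA[of f] closed_imp_ideal[of f] J by simp
      then show "J \<in> phiF P R ` IncR P R" using f by blast
    qed
  qed
qed

end

lemma fold_toggle_ideal:
  "J \<in> order_ideals Q le \<Longrightarrow> fold (toggle Q le) xs J \<in> order_ideals Q le"
proof (induction xs arbitrary: J)
  case (Cons x xs)
  have "toggle Q le x J \<in> order_ideals Q le" using Cons.prems unfolding toggle_def by auto
  then show ?case using Cons.IH by simp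
qed simp

lemma H_snd: "(case x of (p, k) \<Rightarrow> k) = snd x" by (cases x) simp

lemma togT_triv:
  assumes "i \<notin> (\<lambda>(p, k). k) ` Q"
  shows "togT Q le (\<lambda>(p, k). k) i = id"
proof -
  have e: "{x\<in>Q. (\<lambda>(p, k). k) x = i} = {}" using assms by auto
  have sm: "(SOME xs. distinct xs \<and> set xs = ({}::('x \<times> int) set)) = []"
    by (rule some_equality) auto
  show ?thesis unfolding togT_def e sm by simp
qed

lemma RV_upd: "f \<in> RV P R \<Longrightarrow> q \<in> P \<Longrightarrow> v \<in> R q \<Longrightarrow> f(q := v) \<in> RV P R"
  unfolding RV_def extensional_def by auto

lemma phi_upd: "(p, k) \<in> phiF P R (f(q := v)) \<longleftrightarrow> (p, k) \<in> Gamma P R \<and> (if p = q then v \<le> k else f p \<le> k)"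
  by (simp add: phiF_iff)

lemma rho_at:
  assumes p: "p \<in> P"
  shows "rho P R i f p = (if f p = i \<and> (\<exists>x. is_succ (R p) i x \<and> f(p := x) \<in> IncR P R)
       then (THE x. is_succ (R p) i x)
     else if is_succ (R p) i (f p) \<and> f(p := i) \<in> IncR P R then i
     else f p)"
  unfolding rho_def using p by (simp only: simp_thms)

context incsetup
begin

lemma finG: "finite (Gamma P R)"
proof -
  have "Gamma P R \<subseteq> Sigma P R" by (auto simp: Gamma_def)
  moreover have "finite (Sigma P R)" using finP finR by (rule finite_SigmaI)
  ultimately show ?thesis by (rule finite_subset)
qed

lemma inc_iff_ideal: "f \<in> RV P R \<Longrightarrow> f \<in> IncR P R \<longleftrightarrow> phiF P R f \<in> order_ideals (Gamma P R) (gamma_cover P R)\<^sup>*\<^sup>*"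
  using lemmaA closed_imp_ideal by blast

lemma togT_simul:
  assumes J: "J \<in> order_ideals (Gamma P R) (gamma_cover P R)\<^sup>*\<^sup>*"
  shows "togT (Gamma P R) (gamma_cover P R)\<^sup>*\<^sup>* (\<lambda>(p, k). k) i J =
    simul (Gamma P R) (gamma_cover P R)\<^sup>*\<^sup>* {x\<in>Gamma P R. (\<lambda>(p, k). k) x = i} J"
proof -
  let ?S = "{x\<in>Gamma P R. (\<lambda>(p, k). k) x = i}"
  have "finite ?S" using finG by simp
  then have ex: "\<exists>xs. distinct xs \<and> set xs = ?S" using finite_distinct_list by blast
  define xs where "xs = (SOME xs. distinct xs \<and> set xs = ?S)"
  have xs: "distinct xs \<and> set xs = ?S" unfolding xs_def using someI_ex[OF ex] .
  have nc: "\<forall>a\<in>set xs. \<forall>b\<in>set xs. \<not> gamma_cover P R a b"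
  proof (intro ballI notI)
    fix a b assume "a \<in> set xs" "b \<in> set xs" "gamma_cover P R a b"
    then show False using xs gc_snd[of P R a b] H_snd[of a] H_snd[of b] by simp
  qed
  have "togT (Gamma P R) (gamma_cover P R)\<^sup>*\<^sup>* (\<lambda>(p, k). k) i J = fold (toggle (Gamma P R) (gamma_cover P R)\<^sup>*\<^sup>*) xs J"
    unfolding togT_def xs_def by simp
  also have "\<dots> = simul (Gamma P R) (gamma_cover P R)\<^sup>*\<^sup>* (set xs) J"
    by (rule gcrel.fold_toggle) (use xs nc J in auto)
  finally show ?thesis using xs by simp
qed

lemma rho_RV:
  assumes f: "f \<in> RV P R" shows "rho P R i f \<in> RV P R"
proof -
  have ext: "rho P R i f \<in> extensional P"
    using f unfolding RV_def extensional_def rho_def by auto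
  have "rho P R i f p \<in> R p" if p: "p \<in> P" for p
  proof -
    have fR: "f p \<in> R p" using f p unfolding RV_def by auto
    show ?thesis
    proof (cases "f p = i \<and> (\<exists>x. is_succ (R p) i x \<and> f(p := x) \<in> IncR P R)")
      case True
      then obtain s where s: "is_succ (R p) i s" by blast
      then have "(THE x. is_succ (R p) i x) = s" using is_succ_unique by blast
      then have "rho P R i f p = s" by (simp only: rho_at[OF p] if_P[OF True])
      then show ?thesis using s unfolding is_succ_def by simp
    next
      case nf: False
      show ?thesis
      proof (cases "is_succ (R p) i (f p) \<and> f(p := i) \<in> IncR P R")
        case True
        then have "i \<in> R p" using p unfolding IncR_def by (metis (mono_tags, lifting) fun_upd_same mem_Collect_eq)
        moreover have "f p \<noteq> i" using True unfolding is_succ_def by auto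
        moreover have "rho P R i f p = i" by (simp only: rho_at[OF p] if_not_P[OF nf] if_P[OF True])
        ultimately show ?thesis by simp
      next
        case False
        have "rho P R i f p = f p" by (simp only: rho_at[OF p] if_not_P[OF nf] if_not_P[OF False])
        then show ?thesis using fR by simp
      qed
    qed
  qed
  then show ?thesis using ext unfolding RV_def by blast
qed

end

context incsetup
begin

abbreviation "IdG \<equiv> order_ideals (Gamma P R) (gamma_cover P R)\<^sup>*\<^sup>*"
abbreviation "SS i \<equiv> {x\<in>Gamma P R. (\<lambda>(p, k). k) x = i}"

lemma rho_step:
  assumes f: "f \<in> IncR P R"
  shows "phiF P R (rho P R i f) = simul (Gamma P R) (gamma_cover P R)\<^sup>*\<^sup>* (SS i) (phiF P R f)"
proof (rule set_eqI)
  fix x :: "'a \<times> int"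
  obtain p k where x: "x = (p, k)" by (cases x) blast
  have fRV: "f \<in> RV P R" using f IncR_RV by blast
  let ?I = "phiF P R f"
  have Iid: "?I \<in> IdG" using f fRV inc_iff_ideal by blast
  show "x \<in> phiF P R (rho P R i f) \<longleftrightarrow> x \<in> simul (Gamma P R) (gamma_cover P R)\<^sup>*\<^sup>* (SS i) ?I"
  proof (cases "(p, k) \<in> Gamma P R")
    case False
    then show ?thesis using phi_sub[of f] x unfolding simul_def by (auto simp: phiF_iff)
  next
    case G: True
    then have pP: "p \<in> P" and kR: "k \<in> R p" and kne: "k \<noteq> Max (R p)" by (simp_all add: Gamma_iff)
    have fR: "f p \<in> R p" using fRV pP unfolding RV_def by auto
    have finp: "finite (R p)" using finR[OF pP] .
    show ?thesis
    proof (cases "k = i")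
      case False
      then have xS: "x \<notin> SS i" using x by simp
      have "rho P R i f p \<le> k \<longleftrightarrow> f p \<le> k"
      proof (cases "f p = i \<and> (\<exists>x. is_succ (R p) i x \<and> f(p := x) \<in> IncR P R)")
        case True
        then obtain s where s: "is_succ (R p) i s" by blast
        then have "(THE x. is_succ (R p) i x) = s" using is_succ_unique by blast
        then have "rho P R i f p = s" by (simp only: rho_at[OF pP] if_P[OF True])
        then show ?thesis using succ_le_iff[OF s kR False] True by simp
      next
        case nf: False
        show ?thesis
        proof (cases "is_succ (R p) i (f p) \<and> f(p := i) \<in> IncR P R")
          case True
          have "rho P R i f p = i" by (simp only: rho_at[OF pP] if_not_P[OF nf] if_P[OF True])
          then show ?thesis using succ_le_iff[OF _ kR False, of "f p"] True by simp
        next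
          case False
          have "rho P R i f p = f p" by (simp only: rho_at[OF pP] if_not_P[OF nf] if_not_P[OF False])
          then show ?thesis by simp
        qed
      qed
      then show ?thesis using xS x G unfolding simul_def by (simp add: phiF_iff)
    next
      case True
      then have xS: "x \<in> SS i" using x G by simp
      have iR: "i \<in> R p" and ine: "i \<noteq> Max (R p)" using kR kne True by auto
      have MR: "Max (R p) \<in> R p" using finp neR[OF pP] by simp
      have "i \<le> Max (R p)" using finp iR by simp
      then obtain s where s: "is_succ (R p) i s" using succ_exists[OF finp MR] ine by force
      have sR: "s \<in> R p" and iss: "i < s" using s unfolding is_succ_def by auto
      have Gi: "(p, i) \<in> Gamma P R" using G True by simp
      have goal: "rho P R i f p \<le> i \<longleftrightarrow> (p, i) \<in> toggle (Gamma P R) (gamma_cover P R)\<^sup>*\<^sup>* (p, i) ?I"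
      proof -
        consider (eq) "f p = i" | (sc) "f p = s" | (ot) "f p \<noteq> i" "f p \<noteq> s" by blast
        then show ?thesis
        proof cases
          case eq
          have c1: "(\<exists>x. is_succ (R p) i x \<and> f(p := x) \<in> IncR P R) \<longleftrightarrow> f(p := s) \<in> IncR P R"
            using s is_succ_unique by blast
          have the: "(THE x. is_succ (R p) i x) = s" using s is_succ_unique by blast
          have ns: "\<not> is_succ (R p) i (f p)" using eq unfolding is_succ_def by simp
          have rv: "rho P R i f p = (if f(p := s) \<in> IncR P R then s else f p)"
            using rho_at[OF pP, where i=i and f=f and R=R] eq c1 the ns by simp
          have upd: "phiF P R (f(p := s)) = ?I - {(p, i)}"
          proof (rule set_eqI)
            fix y :: "'a \<times> int"
            obtain q k' where y: "y = (q, k')" by (cases y) blast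
            show "y \<in> phiF P R (f(p := s)) \<longleftrightarrow> y \<in> ?I - {(p, i)}"
            proof (cases "q = p \<and> y \<in> Gamma P R")
              case True
              then have "k' \<in> R p" using y by (auto simp: Gamma_iff)
              then have "k' \<noteq> i \<Longrightarrow> (i \<le> k' \<longleftrightarrow> s \<le> k')" using succ_le_iff[OF s] by blast
              then show ?thesis using True y eq iss by (auto simp: phi_upd phiF_iff)
            next
              case False
              then show ?thesis using y by (auto simp: phi_upd phiF_iff)
            qed
          qed
          have inI: "(p, i) \<in> ?I" using Gi eq by (simp add: phiF_iff)
          have "f(p := s) \<in> IncR P R \<longleftrightarrow> ?I - {(p, i)} \<in> IdG"
            using inc_iff_ideal[OF RV_upd[OF fRV pP sR]] upd by simp
          then show ?thesis using rv inI eq iss unfolding toggle_def by auto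
        next
          case sc
          have n1: "\<not> (f p = i \<and> (\<exists>x. is_succ (R p) i x \<and> f(p := x) \<in> IncR P R))" using sc iss by simp
          have rv: "rho P R i f p = (if f(p := i) \<in> IncR P R then i else f p)"
          proof -
            have st: "is_succ (R p) i (f p)" using sc s by simp
            show ?thesis by (simp only: rho_at[OF pP] if_not_P[OF n1] st simp_thms)
          qed
          have upd: "phiF P R (f(p := i)) = insert (p, i) ?I"
          proof (rule set_eqI)
            fix y :: "'a \<times> int"
            obtain q k' where y: "y = (q, k')" by (cases y) blast
            show "y \<in> phiF P R (f(p := i)) \<longleftrightarrow> y \<in> insert (p, i) ?I"
            proof (cases "q = p \<and> y \<in> Gamma P R")
              case True
              then have "k' \<in> R p" using y by (auto simp: Gamma_iff)
              then have "k' \<noteq> i \<Longrightarrow> (i \<le> k' \<longleftrightarrow> s \<le> k')" using succ_le_iff[OF s] by blast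
              then show ?thesis using True y sc Gi by (auto simp: phi_upd phiF_iff)
            next
              case False
              then show ?thesis using y Gi by (auto simp: phi_upd phiF_iff)
            qed
          qed
          have ninI: "(p, i) \<notin> ?I" using sc iss by (simp add: phiF_iff)
          have "f(p := i) \<in> IncR P R \<longleftrightarrow> insert (p, i) ?I \<in> IdG"
            using inc_iff_ideal[OF RV_upd[OF fRV pP iR]] upd by simp
          then show ?thesis using rv ninI sc iss unfolding toggle_def by auto
        next
          case ot
          have n1: "\<not> (f p = i \<and> (\<exists>x. is_succ (R p) i x \<and> f(p := x) \<in> IncR P R))" using ot by simp
          have n2: "\<not> (is_succ (R p) i (f p) \<and> f(p := i) \<in> IncR P R)" using ot s is_succ_unique by blast
          have rv: "rho P R i f p = f p" by (simp only: rho_at[OF pP] if_not_P[OF n1] if_not_P[OF n2])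
          have tm: "(p, i) \<in> toggle (Gamma P R) (gamma_cover P R)\<^sup>*\<^sup>* (p, i) ?I \<longleftrightarrow>
             ((p, i) \<notin> ?I \<and> (\<forall>a. gamma_cover P R a (p, i) \<longrightarrow> a \<in> ?I)) \<or>
             ((p, i) \<in> ?I \<and> (\<exists>b\<in>?I. gamma_cover P R (p, i) b))"
            by (rule gcrel.toggle_mem[OF Iid Gi])
          show ?thesis
          proof (cases "f p < i")
            case True
            obtain k' where k': "is_pred (R p) i k'" using pred_exists[OF finp fR True] by blast
            have k'b: "f p \<le> k'" "k' < i" "k' \<in> R p" using k' fR True unfolding is_pred_def by auto
            have gk': "(p, k') \<in> Gamma P R" using pP k'b \<open>i \<le> Max (R p)\<close> by (simp add: Gamma_iff)
            have bI: "(p, k') \<in> ?I" using gk' k'b by (simp add: phiF_iff)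
            have gc: "gamma_cover P R (p, i) (p, k')"
              unfolding gc_iff using Gi gk' pred_succ[OF k' iR] by simp
            have "(p, i) \<in> ?I" using Gi True by (simp add: phiF_iff)
            then show ?thesis using tm bI gc rv True by auto
          next
            case False
            then have gt: "i < f p" using ot by simp
            then have "s \<le> f p" using s fR unfolding is_succ_def by auto
            then have sf: "s < f p" using ot by simp
            have "f p \<le> Max (R p)" using finp fR by simp
            then have gs: "(p, s) \<in> Gamma P R" using pP sR sf by (simp add: Gamma_iff)
            have gc: "gamma_cover P R (p, s) (p, i)"
              unfolding gc_iff using Gi gs s by simp
            have "(p, s) \<notin> ?I" using sf by (simp add: phiF_iff)
            moreover have "(p, i) \<notin> ?I" using gt by (simp add: phiF_iff)
            ultimately show ?thesis using tm gc rv gt by auto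
          qed
        qed
      qed
      have "x \<in> phiF P R (rho P R i f) \<longleftrightarrow> rho P R i f p \<le> i" using x G True by (simp add: phiF_iff)
      moreover have "x \<in> simul (Gamma P R) (gamma_cover P R)\<^sup>*\<^sup>* (SS i) ?I \<longleftrightarrow>
          (p, i) \<in> toggle (Gamma P R) (gamma_cover P R)\<^sup>*\<^sup>* (p, i) ?I"
        using xS x True unfolding simul_def by simp
      ultimately show ?thesis using goal by simp
    qed
  qed
qed

end

context incsetup
begin

lemma rho_step2:
  assumes f: "f \<in> IncR P R"
  shows "rho P R i f \<in> IncR P R \<and>
    phiF P R (rho P R i f) = togT (Gamma P R) (gamma_cover P R)\<^sup>*\<^sup>* (\<lambda>(p, k). k) i (phiF P R f)"
proof -
  have fRV: "f \<in> RV P R" using f IncR_RV by blast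
  have Iid: "phiF P R f \<in> IdG" using f fRV inc_iff_ideal by blast
  have eq: "phiF P R (rho P R i f) = togT (Gamma P R) (gamma_cover P R)\<^sup>*\<^sup>* (\<lambda>(p, k). k) i (phiF P R f)"
    using rho_step[OF f] togT_simul[OF Iid] by simp
  have "togT (Gamma P R) (gamma_cover P R)\<^sup>*\<^sup>* (\<lambda>(p, k). k) i (phiF P R f) \<in> IdG"
    unfolding togT_def by (rule fold_toggle_ideal[OF Iid])
  then have "rho P R i f \<in> IncR P R" using inc_iff_ideal[OF rho_RV[OF fRV]] eq by simp
  then show ?thesis using eq by simp
qed

lemma fold_rho:
  "f \<in> IncR P R \<Longrightarrow> fold (rho P R) xs f \<in> IncR P R \<and>
    phiF P R (fold (rho P R) xs f) = fold (togT (Gamma P R) (gamma_cover P R)\<^sup>*\<^sup>* (\<lambda>(p, k). k)) xs (phiF P R f)"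
proof (induction xs arbitrary: f)
  case Nil
  then show ?case by simp
next
  case (Cons a xs)
  show ?case using Cons.IH[of "rho P R a f"] rho_step2[OF Cons.prems, of a] by simp
qed

lemma TogPro_eq:
  "fold (togT (Gamma P R) le (\<lambda>(p, k). k)) (sorted_list_of_set (\<Union>p\<in>P. R p)) J =
   TogPro (Gamma P R) le (\<lambda>(p, k). k) J"
proof -
  let ?U = "\<Union>p\<in>P. R p"
  let ?L = "(\<lambda>(p, k). k) ` Gamma P R"
  have finU: "finite ?U" using finP finR by blast
  have LU: "?L \<subseteq> ?U" by (auto simp: Gamma_def)
  have finL: "finite ?L" using finG by simp
  have "fold (togT (Gamma P R) le (\<lambda>(p, k). k)) (sorted_list_of_set ?U) =
        fold (togT (Gamma P R) le (\<lambda>(p, k). k)) (filter (\<lambda>i. i \<in> ?L) (sorted_list_of_set ?U))"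
    by (rule fold_filter_id) (auto intro: togT_triv)
  also have "filter (\<lambda>i. i \<in> ?L) (sorted_list_of_set ?U) = sorted_list_of_set ?L"
  proof (rule sorted_distinct_set_unique)
    show "sorted (filter (\<lambda>i. i \<in> ?L) (sorted_list_of_set ?U))"
      by (rule sorted_wrt_filter) simp
    show "distinct (filter (\<lambda>i. i \<in> ?L) (sorted_list_of_set ?U))" by simp
    show "sorted (sorted_list_of_set ?L)" by simp
    show "distinct (sorted_list_of_set ?L)" by simp
    show "set (filter (\<lambda>i. i \<in> ?L) (sorted_list_of_set ?U)) = set (sorted_list_of_set ?L)"
      using finU finL LU by auto
  qed
  finally show ?thesis unfolding TogPro_def by simp
qed

end

theorem theorem4p31:
  fixes P :: "'a::order set" and R :: "'a \<Rightarrow> int set"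
  assumes "finite P"
    and "restriction_fun P R"
    and "consistent P R"
  shows "\<exists>\<phi>. bij_betw \<phi> (IncR P R) (order_ideals (Gamma P R) (gamma_le P R)) \<and>
           (\<forall>f\<in>IncR P R. \<phi> (IncPro P R f) =
              TogPro (Gamma P R) (gamma_le P R) (\<lambda>(p, k). k) (\<phi> f))"
proof -
  interpret incsetup P R using assms by unfold_locales
  have le: "gamma_le P R = (gamma_cover P R)\<^sup>*\<^sup>*" by (simp add: gamma_le_def)
  show ?thesis unfolding le
  proof (intro exI conjI ballI)
    show "bij_betw (phiF P R) (IncR P R) (order_ideals (Gamma P R) (gamma_cover P R)\<^sup>*\<^sup>*)"
      by (rule phi_bij)
    fix f assume f: "f \<in> IncR P R"
    have "phiF P R (IncPro P R f) = fold (togT (Gamma P R) (gamma_cover P R)\<^sup>*\<^sup>* (\<lambda>(p, k). k))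
            (sorted_list_of_set (\<Union>p\<in>P. R p)) (phiF P R f)"
      unfolding IncPro_def using fold_rho[OF f] by blast
    also have "\<dots> = TogPro (Gamma P R) (gamma_cover P R)\<^sup>*\<^sup>* (\<lambda>(p, k). k) (phiF P R f)"
      by (rule TogPro_eq)
    finally show "phiF P R (IncPro P R f) = TogPro (Gamma P R) (gamma_cover P R)\<^sup>*\<^sup>* (\<lambda>(p, k). k) (phiF P R f)" .
  qed
qed

end
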